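(* Let $\phi=(\phi_i)_{i\ge1}$ and $\psi=(\psi_i)_{i\ge1}$ be sequences of real numbers with $\psi_i>-2$ for all $i\ge1$. Define polynomials $\mathcal{H}_n^{\phi,\psi}$ by $\mathcal{H}_0^{\phi,\psi}=1$ and, for $n\ge0$, $$\mathcal{H}_{n+1}^{\phi,\psi}(x)=2x\mathcal{H}_n^{\phi,\psi}(x)-(\mathcal{H}_n^{\phi,\psi})'(x)+(\phi_{n+1}+x\psi_{n+1})\mathcal{H}_n^{\phi,\psi}(x).$$ Then for every $n\ge0$ the polynomial $\mathcal{H}_n^{\phi,\psi}$ has only real and simple zeros, and the zeros of $\mathcal{H}_{n+1}^{\phi,\psi}$ interlace the zeros of $\mathcal{H}_n^{\phi,\psi}$.
   Context: $\mathcal{H}_n^{\phi,\psi}$ has degree $n$ and leading coefficient $\prod_{i=1}^n(\psi_i+2)$. Interlacing: given two finite sets $U,V$ of real numbers, $U$ (strictly) interlaces $V$ if $\min U<\min V$ and between any two consecutive elements of either of the two sets there is an element of the other; "the zeros of $p$ interlace the zeros of $q$" means the corresponding sets of zeros satisfy this. *)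

theory Defs
  imports "HOL-Computational_Algebra.Polynomial"
begin

text \<open>The polynomials H_n^{phi,psi}; the sequences phi, psi are indexed from 1.\<close>
primrec Hpoly :: "(nat \<Rightarrow> real) \<Rightarrow> (nat \<Rightarrow> real) \<Rightarrow> nat \<Rightarrow> real poly" where
  "Hpoly phi psi 0 = 1"
| "Hpoly phi psi (Suc n) =
     [:0, 2:] * Hpoly phi psi n - pderiv (Hpoly phi psi n)
     + [:phi (Suc n), psi (Suc n):] * Hpoly phi psi n"

definition interlaces :: "real set \<Rightarrow> real set \<Rightarrow> bool" where
  "interlaces U V \<longleftrightarrow> finite U \<and> finite V \<and>
     (U \<noteq> {} \<and> V \<noteq> {} \<longrightarrow> Min U < Min V) \<and>
     (\<forall>a\<in>U. \<forall>b\<in>U. a < b \<and> (\<forall>c\<in>U. \<not> (a < c \<and> c < b)) \<longrightarrow> (\<exists>v\<in>V. a < v \<and> v < b)) \<and>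
     (\<forall>a\<in>V. \<forall>b\<in>V. a < b \<and> (\<forall>c\<in>V. \<not> (a < c \<and> c < b)) \<longrightarrow> (\<exists>u\<in>U. a < u \<and> u < b))"

definition real_zeros :: "real poly \<Rightarrow> real set" where
  "real_zeros p = {x. poly p x = 0}"

definition real_simple_zeros :: "real poly \<Rightarrow> bool" where
  "real_simple_zeros p \<longleftrightarrow> p \<noteq> 0 \<and>
     (\<forall>z::complex. poly (map_poly complex_of_real p) z = 0 \<longrightarrow>
        Im z = 0 \<and> order z (map_poly complex_of_real p) = 1)"

end

theory Submission
  imports Defs
begin

lemma lc_add_low: "degree q < degree p \<Longrightarrow> lead_coeff (p + q) = lead_coeff p"
  by (metis add.commute lead_coeff_add_le)

lemma H_deg_lc:
  assumes "\<forall>i\<ge>1. psi i > (-2::real)"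
  shows "degree (Hpoly phi psi n) = n \<and> lead_coeff (Hpoly phi psi n) > 0"
proof (induction n)
  case 0 then show ?case by simp
next
  case (Suc n)
  let ?H = "Hpoly phi psi n"
  have eq: "Hpoly phi psi (Suc n) = [:phi (Suc n), 2 + psi (Suc n):] * ?H + (- pderiv ?H)"
    by (simp add: algebra_simps smult_add_left[symmetric])
  have c: "2 + psi (Suc n) > 0" using assms[rule_format, of "Suc n"] by simp
  have H0: "?H \<noteq> 0" using Suc by auto
  have d1: "degree ([:phi (Suc n), 2 + psi (Suc n):] * ?H) = Suc n"
    using c H0 Suc by (subst degree_mult_eq) auto
  have d2: "degree (- pderiv ?H) < Suc n" using Suc by (simp add: degree_pderiv)
  have "degree (Hpoly phi psi (Suc n)) = Suc n"
    unfolding eq using d1 d2 by (subst degree_add_eq_left) auto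
  moreover have "lead_coeff (Hpoly phi psi (Suc n)) = (2 + psi (Suc n)) * lead_coeff ?H"
    unfolding eq using d1 d2 c
    by (subst lc_add_low) (simp_all only: lead_coeff_mult, simp add: coeff_eq_0 Suc.IH)
  moreover have "lead_coeff ?H > 0" using Suc.IH by auto
  ultimately show ?case using c by (simp del: Hpoly.simps)
qed

lemma factor_roots:
  fixes p :: "'a::idom poly"
  assumes "finite S" "\<forall>r\<in>S. poly p r = 0"
  shows "\<exists>q. p = (\<Prod>r\<in>S. [:-r,1:]) * q"
  using assms
proof (induction S arbitrary: p rule: finite_induct)
  case empty then show ?case by simp
next
  case (insert a S)
  then obtain q where q: "p = (\<Prod>r\<in>S. [:-r,1:]) * q" by auto
  have "poly (\<Prod>r\<in>S. [:-r,1:]) a \<noteq> 0" using insert(1,2) by (auto simp: poly_prod)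
  moreover have "poly p a = 0" using insert by auto
  ultimately have "poly q a = 0" using q by simp
  then obtain q' where qq: "q = [:-a,1:] * q'" using poly_eq_0_iff_dvd by (metis dvdE)
  have "p = ([:-a,1:] * (\<Prod>r\<in>S. [:-r,1:])) * q'" using q qq by (simp only: mult_ac)
  moreover have "(\<Prod>r\<in>insert a S. [:-r,1:]) = [:-a,1:] * (\<Prod>r\<in>S. [:-r,1:])"
    using insert(1,2) by simp
  ultimately show ?case by metis
qed

lemma deg_linprod:
  fixes S :: "'a::idom set"
  assumes "finite S"
  shows "degree (\<Prod>r\<in>S. [:-r,1:]) = card S" "lead_coeff (\<Prod>r\<in>S. [:-r,1:]) = 1"
proof -
  show "degree (\<Prod>r\<in>S. [:-r,1:]) = card S"
    by (subst degree_prod_sum_eq) auto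
  show "lead_coeff (\<Prod>r\<in>S. [:-r,1:]) = 1"
    by (simp add: lead_coeff_prod)
qed

lemma sign_prod:
  fixes A :: "real set"
  assumes "finite A" "t \<notin> A"
  shows "(-1)^card {a\<in>A. t < a} * (\<Prod>a\<in>A. (t - a)) > 0"
  using assms
proof (induction A rule: finite_induct)
  case empty then show ?case by simp
next
  case (insert b A)
  have IH: "(-1)^card {a\<in>A. t < a} * (\<Prod>a\<in>A. (t - a)) > 0" using insert by auto
  have fin: "finite {a\<in>A. t < a}" using insert by auto
  show ?case
  proof (cases "t < b")
    case True
    then have "{a\<in>insert b A. t < a} = insert b {a\<in>A. t < a}" by auto
    then have "card {a\<in>insert b A. t < a} = Suc (card {a\<in>A. t < a})" using insert fin by simp
    moreover have "t - b < 0" using True by simp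
    have "(t - b) * ((-1)^card {a\<in>A. t < a} * (\<Prod>a\<in>A. (t - a))) < 0"
      by (rule mult_neg_pos) fact+
    with calculation show ?thesis using insert
      by (simp add: mult_ac)

  next
    case False
    then have "{a\<in>insert b A. t < a} = {a\<in>A. t < a}" by auto
    moreover have "t - b > 0" using False insert by auto
    ultimately show ?thesis using insert IH by (simp add: mult_ac)
  qed
qed

lemma poly_of_real_map: "poly (map_poly of_real p) (of_real x) = (of_real (poly p x) :: complex)"
  by (induction p) (auto simp: map_poly_pCons)

lemma simple_zeros_from_card:
  fixes p :: "real poly"
  assumes p0: "p \<noteq> 0" and cd: "card (real_zeros p) = degree p"
  shows "real_simple_zeros p"
proof -
  define S where "S = real_zeros p"
  have finS: "finite S" unfolding S_def real_zeros_def using poly_roots_finite[OF p0] .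
  define P where "P = map_poly complex_of_real p"
  define S' where "S' = complex_of_real ` S"
  have finS': "finite S'" unfolding S'_def using finS by simp
  have cS': "card S' = degree p" unfolding S'_def using cd
    by (simp add: S_def card_image inj_on_def)
  have degP: "degree P = degree p" unfolding P_def by (rule degree_map_poly) simp
  have rootsP: "\<forall>r\<in>S'. poly P r = 0"
    unfolding S'_def S_def real_zeros_def P_def by (auto simp: poly_of_real_map)
  obtain q where q: "P = (\<Prod>r\<in>S'. [:-r,1:]) * q"
    using factor_roots[OF finS' rootsP] by blast
  have P0: "P \<noteq> 0" unfolding P_def using p0 by (subst map_poly_eq_0_iff) auto
  then have q0: "q \<noteq> 0" using q by auto
  have pr0: "(\<Prod>r\<in>S'. [:-r,1:]) \<noteq> 0" using deg_linprod(2)[OF finS'] by auto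
  have "degree P = card S' + degree q"
    using q q0 pr0 by (simp add: degree_mult_eq deg_linprod[OF finS'])
  then have dq: "degree q = 0" using degP cS' by simp
  then obtain c0 where c0: "q = [:c0:]" using degree_eq_zeroE by blast
  have pq: "\<And>z. poly q z \<noteq> 0" using q0 c0 by auto
  show ?thesis unfolding real_simple_zeros_def
  proof (intro conjI allI impI)
    show "p \<noteq> 0" by fact
    fix z assume z: "poly (map_poly complex_of_real p) z = 0"
    then have "poly (\<Prod>r\<in>S'. [:-r,1:]) z = 0" using q pq unfolding P_def by simp
    then have zS: "z \<in> S'" using finS' by (auto simp: poly_prod)
    then show "Im z = 0" unfolding S'_def by auto
    have "(\<Prod>r\<in>S'. [:-r,1:]) = [:-z,1:] * (\<Prod>r\<in>S'-{z}. [:-r,1:])"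
      using zS finS' by (simp add: prod.remove)
    then have split: "P = [:-z,1:] * ((\<Prod>r\<in>S'-{z}. [:-r,1:]) * q)"
      using q by (simp only: mult.assoc)
    have nz: "poly ((\<Prod>r\<in>S'-{z}. [:-r,1:]) * q) z \<noteq> 0"
      using pq finS' by (auto simp: poly_prod)
    have "order z P = order z [:-z,1:] + order z ((\<Prod>r\<in>S'-{z}. [:-r,1:]) * q)"
      using P0 split by (metis order_mult)
    also have "\<dots> = 1" using order_0I[OF nz] order_power_n_n[of z 1] by simp
    finally show "order z (map_poly complex_of_real p) = 1" unfolding P_def .
  qed
qed

lemma deriv_at_root:
  fixes S :: "real set"
  assumes "finite S" "t \<in> S"
  shows "poly (pderiv (smult c (\<Prod>r\<in>S. [:-r,1:]))) t = c * (\<Prod>r\<in>S-{t}. (t - r))"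
proof -
  have "(\<Prod>r\<in>S. [:-r,1:]) = [:-t,1:] * (\<Prod>r\<in>S-{t}. [:-r,1:])"
    using assms by (simp add: prod.remove)
  then have "poly (pderiv (smult c (\<Prod>r\<in>S. [:-r,1:]))) t
     = c * (poly [:-t,1:] t * poly (pderiv (\<Prod>r\<in>S-{t}. [:-r,1:])) t
         + poly (\<Prod>r\<in>S-{t}. [:-r,1:]) t * poly (pderiv [:-t,1:]) t)"
    by (simp only: pderiv_smult pderiv_mult poly_smult poly_add poly_mult)
  then show ?thesis
    by (simp add: pderiv_pCons poly_prod)
qed

lemma poly_minfty:
  fixes q :: "real poly"
  assumes "lead_coeff q > 0"
  shows "\<exists>M. \<forall>t\<le>M. (-1)^degree q * poly q t > 0"
proof -
  define r where "r = smult ((-1)^degree q) (pcompose q [:0,-1:])"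
  have "lead_coeff (pcompose q [:0,-1:]) = lead_coeff q * (-1)^degree q"
    by (subst lead_coeff_comp) auto
  then have "lead_coeff r = lead_coeff q" unfolding r_def
    by (simp add: power_mult_distrib[symmetric])
  then obtain N where N: "\<forall>s\<ge>N. poly r s \<ge> lead_coeff q"
    using poly_pinfty_gt_lc assms by metis
  show ?thesis
  proof (intro exI allI impI)
    fix t :: real assume "t \<le> - N"
    then have "poly r (-t) \<ge> lead_coeff q" using N by auto
    then show "(-1)^degree q * poly q t > 0" using assms unfolding r_def
      by (simp add: poly_pcompose)
  qed
qed

lemma mono_chain:
  fixes f :: "nat \<Rightarrow> real"
  assumes "\<forall>i. Suc i \<le> m \<longrightarrow> f i < f (Suc i)" "i < j" "j \<le> m"
  shows "f i < f j"
  using assms(2,3)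
proof (induction j)
  case 0 then show ?case by simp
next
  case (Suc j)
  then show ?case using assms(1)
    by (cases "i = j") (auto simp: less_Suc_eq)
qed

lemma mono_chain_le:
  fixes f :: "nat \<Rightarrow> real"
  assumes "\<forall>i. Suc i \<le> m \<longrightarrow> f i < f (Suc i)" "i \<le> j" "j \<le> m"
  shows "f i \<le> f j"
  using mono_chain[OF assms(1), of i j] assms by (cases "i = j") auto

lemma interl:
  fixes x y :: "nat \<Rightarrow> real"
  assumes xy: "\<forall>i<n. y i < x i \<and> x i < y (Suc i)"
  shows "interlaces (y ` {..n}) (x ` {..<n})"
proof -
  have my: "\<forall>i. Suc i \<le> n \<longrightarrow> y i < y (Suc i)"
  proof (intro allI impI)
    fix i assume "Suc i \<le> n"
    then have "i < n" by auto
    then show "y i < y (Suc i)" using xy by (meson less_trans)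
  qed
  have mx: "\<forall>i. Suc i \<le> n - 1 \<longrightarrow> x i < x (Suc i)"
  proof (intro allI impI)
    fix i assume "Suc i \<le> n - 1"
    then have "i < n" "Suc i < n" by auto
    then show "x i < x (Suc i)" using xy by (meson less_trans)
  qed
  show ?thesis unfolding interlaces_def
  proof (intro conjI impI ballI)
    show "finite (y ` {..n})" "finite (x ` {..<n})" by auto
  next
    assume ne: "y ` {..n} \<noteq> {} \<and> x ` {..<n} \<noteq> {}"
    have "Min (x ` {..<n}) \<in> x ` {..<n}" using ne by (intro Min_in) auto
    then obtain k where k: "k < n" "Min (x ` {..<n}) = x k" by auto
    have "Min (y ` {..n}) \<le> y 0" by (intro Min_le) auto
    also have "y 0 \<le> y k" using mono_chain_le[OF my, of 0 k] k by auto
    also have "y k < x k" using xy k by auto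
    finally show "Min (y ` {..n}) < Min (x ` {..<n})" using k by simp
  next
    fix a b assume a: "a \<in> y ` {..n}" and b: "b \<in> y ` {..n}"
    then obtain i j where ij: "i \<le> n" "j \<le> n" "a = y i" "b = y j" by auto
    assume h: "a < b \<and> (\<forall>c\<in>y ` {..n}. \<not> (a < c \<and> c < b))"
      have "i < j"
      proof (rule ccontr)
        assume "\<not> i < j"
        then have "y j \<le> y i" using mono_chain_le[OF my, of j i] ij by auto
        then show False using h ij by auto
      qed
      have "j = Suc i"
      proof (rule ccontr)
        assume "j \<noteq> Suc i"
        then have "Suc i < j" using \<open>i < j\<close> by auto
        then have "y i < y (Suc i)" "y (Suc i) < y j"
          using mono_chain[OF my] ij by auto
        then show False using h ij \<open>Suc i < j\<close> by auto
      qed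
      then show "\<exists>v\<in>x ` {..<n}. a < v \<and> v < b" using xy ij by (intro bexI[of _ "x i"]) auto
  next
    fix a b assume a: "a \<in> x ` {..<n}" and b: "b \<in> x ` {..<n}"
    then obtain i j where ij: "i < n" "j < n" "a = x i" "b = x j" by auto
    assume h: "a < b \<and> (\<forall>c\<in>x ` {..<n}. \<not> (a < c \<and> c < b))"
      have "i < j"
      proof (rule ccontr)
        assume "\<not> i < j"
        then have "x j \<le> x i" using mono_chain_le[OF mx, of j i] ij by auto
        then show False using h ij by auto
      qed
      have "j = Suc i"
      proof (rule ccontr)
        assume "j \<noteq> Suc i"
        then have "Suc i < j" using \<open>i < j\<close> by auto
        then have "x i < x (Suc i)" "x (Suc i) < x j"
          using mono_chain[OF mx] ij by auto
        then show False using h ij \<open>Suc i < j\<close> by auto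
      qed
      then show "\<exists>v\<in>y ` {..n}. a < v \<and> v < b" using xy ij
        by (intro bexI[of _ "y (Suc i)"]) auto
  qed
qed

lemma sgnsq: "(-1::real)^n * (-1)^n = 1"
  by (induction n) auto

lemma opp_sign:
  fixes u v :: real
  assumes "(-1)^Suc m * u > 0" "(-1)^m * v > 0"
  shows "u * v < 0"
proof -
  have "((-1)^Suc m * u) * ((-1)^m * v) > 0" using assms by (rule mult_pos_pos)
  moreover have "((-1)^Suc m * u) * ((-1)^m * v) = - (u * v) * ((-1::real)^m * (-1)^m)"
    by (simp add: mult_ac)
  then have "((-1)^Suc m * u) * ((-1)^m * v) = - (u * v)" by (simp only: sgnsq mult_1_right)
  ultimately show ?thesis by linarith
qed

lemma deg_step:
  fixes p :: "real poly"
  assumes "degree p = n" "lead_coeff p > 0" "b > 0"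
  shows "degree ([:a, b:] * p - pderiv p) = Suc n \<and> lead_coeff ([:a, b:] * p - pderiv p) > 0"
proof -
  have eq: "[:a, b:] * p - pderiv p = [:a, b:] * p + (- pderiv p)" by simp
  have H0: "p \<noteq> 0" using assms by auto
  have d1: "degree ([:a, b:] * p) = Suc n"
    using assms H0 by (subst degree_mult_eq) auto
  have d2: "degree (- pderiv p) < Suc n" using assms by (simp add: degree_pderiv)
  have "degree ([:a, b:] * p - pderiv p) = Suc n"
    unfolding eq using d1 d2 by (subst degree_add_eq_left) auto
  moreover have "lead_coeff ([:a, b:] * p - pderiv p) = lead_coeff ([:a, b:] * p)"
    unfolding eq using d1 d2 by (subst lc_add_low) auto
  moreover have "lead_coeff ([:a, b:] * p) = b * lead_coeff p"
    using assms(3) by (simp only: lead_coeff_mult) simp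
  ultimately show ?thesis using assms by simp
qed

lemma step:
  fixes p q :: "real poly" and x :: "nat \<Rightarrow> real"
  assumes dp: "degree p = n" and lp: "lead_coeff p > 0"
    and mx: "\<forall>i. Suc i < n \<longrightarrow> x i < x (Suc i)"
    and zp: "real_zeros p = x ` {..<n}"
    and qdef: "q = [:a, b:] * p - pderiv p" and b: "b > 0"
  shows "\<exists>y. (\<forall>i<n. y i < x i \<and> x i < y (Suc i)) \<and> real_zeros q = y ` {..n}"
proof -
  have p0: "p \<noteq> 0" using lp by auto
  have mx': "\<forall>i. Suc i \<le> n - 1 \<longrightarrow> x i < x (Suc i)" using mx by auto
  have xlt: "x i < x j" if "i < j" "j < n" for i j
    using mono_chain[OF mx', of i j] that by auto
  have xle: "x i \<le> x j" if "i \<le> j" "j < n" for i j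
    using xlt[of i j] that by (cases "i = j") auto
  define S where "S = x ` {..<n}"
  have finS: "finite S" unfolding S_def by auto
  have injx: "inj_on x {..<n}"
    unfolding inj_on_def by (metis lessThan_iff linorder_neqE_nat xlt less_irrefl)
  have cS: "card S = n" unfolding S_def using injx by (simp add: card_image)
  have rootsS: "\<forall>r\<in>S. poly p r = 0" using zp unfolding S_def real_zeros_def by auto
  obtain g where g: "p = (\<Prod>r\<in>S. [:-r,1:]) * g" using factor_roots[OF finS rootsS] by blast
  have g0: "g \<noteq> 0" using g p0 by auto
  have pr0: "(\<Prod>r\<in>S. [:-r,1:]) \<noteq> 0" using deg_linprod(2)[OF finS] by auto
  have "degree p = card S + degree g"
    using g g0 pr0 by (simp add: degree_mult_eq deg_linprod[OF finS])
  then have "degree g = 0" using dp cS by simp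
  then obtain c where c: "g = [:c:]" using degree_eq_zeroE by blast
  have "lead_coeff p = c" using g c by (simp only: lead_coeff_mult deg_linprod(2)[OF finS]) simp
  then have cpos: "c > 0" using lp by simp
  have pS: "p = smult c (\<Prod>r\<in>S. [:-r,1:])" using g c by simp
  have dq: "degree q = Suc n" and lq: "lead_coeff q > 0"
    using deg_step[OF dp lp b, of a] unfolding qdef by auto
  have q0: "q \<noteq> 0" using lq by auto
  have sgn: "(-1)^(n-k) * poly q (x k) > 0" if k: "k < n" for k
  proof -
    have xkS: "x k \<in> S" using k unfolding S_def by auto
    have pxk: "poly p (x k) = 0" using rootsS xkS by auto
    have "poly q (x k) = - poly (pderiv p) (x k)" using qdef pxk by simp
    also have "\<dots> = - (c * (\<Prod>r\<in>S-{x k}. (x k - r)))"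
      unfolding pS using deriv_at_root[OF finS xkS] by simp
    finally have pq: "poly q (x k) = - (c * (\<Prod>r\<in>S-{x k}. (x k - r)))" .
    have "{r\<in>S-{x k}. x k < r} = x ` {Suc k..<n}"
    proof
      show "{r\<in>S-{x k}. x k < r} \<subseteq> x ` {Suc k..<n}"
      proof
        fix r assume "r \<in> {r\<in>S-{x k}. x k < r}"
        then obtain j where j: "j < n" "r = x j" "x k < x j" unfolding S_def by auto
        then have "k < j" using xle[of j k] k by (metis not_less)
        then show "r \<in> x ` {Suc k..<n}" using j by auto
      qed
    next
      show "x ` {Suc k..<n} \<subseteq> {r\<in>S-{x k}. x k < r}"
        unfolding S_def using xlt k by (auto, metis Suc_le_eq less_irrefl)
    qed
    moreover have "card (x ` {Suc k..<n}) = n - Suc k"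
      using injx by (subst card_image) (auto intro: inj_on_subset)
    ultimately have ccard: "card {r\<in>S-{x k}. x k < r} = n - Suc k" by simp
    have "(-1)^card {r\<in>S-{x k}. x k < r} * (\<Prod>r\<in>S-{x k}. (x k - r)) > 0"
      using finS by (intro sign_prod) auto
    then have A: "(-1)^(n - Suc k) * (\<Prod>r\<in>S-{x k}. (x k - r)) > 0" using ccard by simp
    have nk: "n - k = Suc (n - Suc k)" using k by simp
    have "(-1)^(n-k) * poly q (x k) = c * ((-1)^(n - Suc k) * (\<Prod>r\<in>S-{x k}. (x k - r)))"
      unfolding pq nk by simp
    then show ?thesis using A cpos by simp
  qed
  obtain M where M: "\<forall>t\<le>M. (-1)^degree q * poly q t > 0" using poly_minfty[OF lq] by blast
  obtain N where N: "\<forall>s\<ge>N. poly q s \<ge> lead_coeff q" using poly_pinfty_gt_lc[OF lq] by blast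
  have "\<exists>t0. poly q t0 < 0 \<and> (\<forall>i<n. x i \<le> t0)"
  proof (cases "n = 0")
    case True
    then show ?thesis using M dq by (intro exI[of _ M]) auto
  next
    case False
    then have "(-1)^(n - (n - 1)) * poly q (x (n - 1)) > 0" using sgn[of "n - 1"] by auto
    then have "poly q (x (n - 1)) < 0" using False by simp
    then show ?thesis using xle False by (intro exI[of _ "x (n - 1)"]) auto
  qed
  then obtain t0 where t0: "poly q t0 < 0" "\<forall>i<n. x i \<le> t0" by blast
  have "poly q (max N (t0 + 1)) > 0" using N lq by (meson max.cobounded1 order_less_le_trans)
  then obtain rt where rt: "t0 < rt" "poly q rt = 0"
    using poly_IVT_pos[of t0 "max N (t0 + 1)" q] t0 by force
  have rt2: "\<forall>i<n. x i < rt" using rt t0 by force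
  have "\<exists>r. n > 0 \<longrightarrow> (poly q r = 0 \<and> r < x 0)"
  proof (cases "n = 0")
    case True then show ?thesis by auto
  next
    case False
    define t1 where "t1 = min M (x 0 - 1)"
    have "(-1)^Suc n * poly q t1 > 0" using M dq unfolding t1_def by auto
    moreover have "(-1)^n * poly q (x 0) > 0" using sgn[of 0] False by auto
    ultimately have "poly q t1 * poly q (x 0) < 0" by (rule opp_sign)
    moreover have "t1 < x 0" unfolding t1_def by auto
    ultimately obtain r where "r < x 0" "poly q r = 0" using poly_IVT by blast
    then show ?thesis by blast
  qed
  then obtain rb where rb: "n > 0 \<Longrightarrow> poly q rb = 0 \<and> rb < x 0" by blast
  have "\<forall>i. \<exists>r. Suc i < n \<longrightarrow> (x i < r \<and> r < x (Suc i) \<and> poly q r = 0)"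
  proof
    fix i show "\<exists>r. Suc i < n \<longrightarrow> (x i < r \<and> r < x (Suc i) \<and> poly q r = 0)"
    proof (cases "Suc i < n")
      case False then show ?thesis by auto
    next
      case True
      have ni: "n - i = Suc (n - Suc i)" using True by simp
      have "(-1)^Suc (n - Suc i) * poly q (x i) > 0" using sgn[of i] True ni by auto
      moreover have "(-1)^(n - Suc i) * poly q (x (Suc i)) > 0" using sgn[of "Suc i"] True by auto
      ultimately have "poly q (x i) * poly q (x (Suc i)) < 0" by (rule opp_sign)
      then obtain r where "x i < r" "r < x (Suc i)" "poly q r = 0"
        using poly_IVT[of "x i" "x (Suc i)" q] mx True by blast
      then show ?thesis by blast
    qed
  qed
  then obtain m where m: "\<And>i. Suc i < n \<Longrightarrow> x i < m i \<and> m i < x (Suc i) \<and> poly q (m i) = 0"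
    by metis
  define y where "y i = (if i = n then rt else if i = 0 then rb else m (i - 1))" for i
  have yx: "\<forall>i<n. y i < x i \<and> x i < y (Suc i)"
  proof (intro allI impI)
    fix i assume i: "i < n"
    have "y i < x i"
    proof (cases "i = 0")
      case True then show ?thesis using rb i unfolding y_def by auto
    next
      case False
      then have "Suc (i - 1) < n" "Suc (i - 1) = i" using i by auto
      then show ?thesis using m[of "i - 1"] i False unfolding y_def by auto
    qed
    moreover have "x i < y (Suc i)"
    proof (cases "Suc i = n")
      case True then show ?thesis using rt2 i unfolding y_def by auto
    next
      case False
      then have "Suc i < n" using i by auto
      then show ?thesis using m[of i] False unfolding y_def by auto
    qed
    ultimately show "y i < x i \<and> x i < y (Suc i)" by blast
  qed
  have yroot: "poly q (y i) = 0" if "i \<le> n" for i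
  proof (cases "i = n")
    case True then show ?thesis using rt unfolding y_def by auto
  next
    case False
    show ?thesis
    proof (cases "i = 0")
      case True then show ?thesis using rb False that unfolding y_def by auto
    next
      case False2: False
      then have "Suc (i - 1) < n" using False that by auto
      then show ?thesis using m[of "i - 1"] False False2 unfolding y_def by auto
    qed
  qed
  have my: "\<forall>i. Suc i \<le> n \<longrightarrow> y i < y (Suc i)"
  proof (intro allI impI)
    fix i assume "Suc i \<le> n"
    then have "i < n" by auto
    then show "y i < y (Suc i)" using yx by (meson less_trans)
  qed
  have injy: "inj_on y {..n}"
    unfolding inj_on_def by (metis atMost_iff linorder_neqE_nat mono_chain[OF my] less_irrefl)
  have cy: "card (y ` {..n}) = Suc n" using injy by (simp add: card_image)
  have sub: "y ` {..n} \<subseteq> real_zeros q" unfolding real_zeros_def using yroot by auto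
  have finq: "finite (real_zeros q)" unfolding real_zeros_def using poly_roots_finite[OF q0] .
  have "card (real_zeros q) \<le> Suc n"
    unfolding real_zeros_def using card_poly_roots_bound[OF q0] dq by simp
  then have "y ` {..n} = real_zeros q" using card_seteq[OF finq sub] cy by simp
  then show ?thesis using yx by blast
qed

lemma H_eq: "Hpoly phi psi (Suc n) = [:phi (Suc n), 2 + psi (Suc n):] * Hpoly phi psi n - pderiv (Hpoly phi psi n)"
  by (simp add: algebra_simps smult_add_left[symmetric])

lemma main_inv:
  assumes psi: "\<forall>i\<ge>1. psi i > (-2::real)"
  shows "\<exists>x. (\<forall>i. Suc i < n \<longrightarrow> x i < x (Suc i)) \<and> real_zeros (Hpoly phi psi n) = x ` {..<n}"
proof (induction n)
  case 0
  show ?case by (auto simp: real_zeros_def)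
next
  case (Suc n)
  then obtain x where x: "\<forall>i. Suc i < n \<longrightarrow> x i < x (Suc i)" "real_zeros (Hpoly phi psi n) = x ` {..<n}"
    by blast
  have c: "2 + psi (Suc n) > 0" using psi[rule_format, of "Suc n"] by simp
  obtain y where y: "\<forall>i<n. y i < x i \<and> x i < y (Suc i)" "real_zeros (Hpoly phi psi (Suc n)) = y ` {..n}"
    using step[OF conjunct1[OF H_deg_lc[OF psi]] conjunct2[OF H_deg_lc[OF psi]] x(1) x(2) H_eq c] by blast
  have "\<forall>i. Suc i < Suc n \<longrightarrow> y i < y (Suc i)" using y(1) by (meson less_Suc_eq_0_disj less_trans not_less_eq)
  moreover have "y ` {..n} = y ` {..<Suc n}" by (simp add: lessThan_Suc_atMost)
  ultimately show ?case using y(2) by metis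
qed

theorem theorem3p3:
  fixes phi psi :: "nat \<Rightarrow> real" and n :: nat
  assumes "\<forall>i\<ge>1. psi i > -2"
  shows "real_simple_zeros (Hpoly phi psi n) \<and>
         interlaces (real_zeros (Hpoly phi psi (Suc n))) (real_zeros (Hpoly phi psi n))"
proof -
  obtain x where x: "\<forall>i. Suc i < n \<longrightarrow> x i < x (Suc i)" "real_zeros (Hpoly phi psi n) = x ` {..<n}"
    using main_inv[OF assms] by blast
  have dl: "degree (Hpoly phi psi n) = n" "lead_coeff (Hpoly phi psi n) > 0"
    using H_deg_lc[OF assms, of phi n] by auto
  have c: "2 + psi (Suc n) > 0" using assms[rule_format, of "Suc n"] by simp
  obtain y where y: "\<forall>i<n. y i < x i \<and> x i < y (Suc i)" "real_zeros (Hpoly phi psi (Suc n)) = y ` {..n}"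
    using step[OF dl x(1) x(2) H_eq c] by blast
  have mx': "\<forall>i. Suc i \<le> n - 1 \<longrightarrow> x i < x (Suc i)" using x(1) by auto
  have injx: "inj_on x {..<n}"
    unfolding inj_on_def by (metis lessThan_iff linorder_neqE_nat mono_chain[OF mx'] less_irrefl
        Suc_pred' le_simps(2) less_nat_zero_code)
  have "card (real_zeros (Hpoly phi psi n)) = degree (Hpoly phi psi n)"
    using x(2) dl injx by (simp add: card_image)
  then have "real_simple_zeros (Hpoly phi psi n)"
    using dl by (intro simple_zeros_from_card) auto
  moreover have "interlaces (real_zeros (Hpoly phi psi (Suc n))) (real_zeros (Hpoly phi psi n))"
    using interl[OF y(1)] x(2) y(2) by simp
  ultimately show ?thesis by blast
qed

end
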